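(* Let $R$ be a countable, cotorsion-free commutative ring. Let $G$ be an almost full embedding of a category of graphs into a category of torsion-free $R$-modules, i.e. a functor such that for all graphs $X,Y$ in its domain the map $\gamma:R[\mathrm{Hom}_{\mathcal{G}raphs}(X,Y)]\to\mathrm{Hom}_R(GX,GY)$, $\sum r_\varphi\varphi\mapsto\sum r_\varphi G\varphi$, is an isomorphism. If $\mathrm{Hom}_{\mathcal{G}raphs}(X,Y)$ is uncountable, then $GX$ or $GY$ is uncountable.
   Context: A graph is a set with a binary relation; graph morphisms are relation-preserving functions. $R[S]$ denotes the free $R$-module with basis $S$. An $R$-module is torsion-free if $bs=0$ with $s\ne0$ implies $b=0$. Cotorsion-free is with respect to a countable multiplicative subset $\mathbb{S}\subseteq R$ ($0\notin\mathbb{S}$, $1\in\mathbb{S}$): $R$ is $\mathbb{S}$-reduced ($\bigcap_{s\in\mathbb{S}}sR=0$), $\mathbb{S}$-torsion-free, and $\mathrm{Hom}_R(\widehat R,R)=0$ for the $\mathbb{S}$-adic completion $\widehat R$. *)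

theory Defs
  imports "HOL-Algebra.Algebra" "HOL-Library.Countable_Set" "HOL-Library.FuncSet"
begin

type_synonym 'v graph = "'v set \<times> ('v \<times> 'v) set"

definition is_graph :: "'v graph \<Rightarrow> bool" where
  "is_graph gX \<longleftrightarrow> snd gX \<subseteq> Sigma (fst gX) (\<lambda>_. fst gX)"

definition graph_hom :: "'v graph \<Rightarrow> 'v graph \<Rightarrow> ('v \<Rightarrow> 'v) set" where
  "graph_hom gX gY = {f. f \<in> fst gX \<rightarrow>\<^sub>E fst gY \<and>
                       (\<forall>u v. (u, v) \<in> snd gX \<longrightarrow> (f u, f v) \<in> snd gY)}"

definition lin_hom :: "'r ring \<Rightarrow> ('r, 'm) module \<Rightarrow> ('r, 'n) module \<Rightarrow> ('m \<Rightarrow> 'n) set" where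
  "lin_hom R M N = {h. h \<in> carrier M \<rightarrow>\<^sub>E carrier N \<and>
     (\<forall>x\<in>carrier M. \<forall>y\<in>carrier M. h (x \<oplus>\<^bsub>M\<^esub> y) = h x \<oplus>\<^bsub>N\<^esub> h y) \<and>
     (\<forall>r\<in>carrier R. \<forall>x\<in>carrier M. h (r \<odot>\<^bsub>M\<^esub> x) = r \<odot>\<^bsub>N\<^esub> h x)}"

definition torsion_free_module :: "'r ring \<Rightarrow> ('r, 'm) module \<Rightarrow> bool" where
  "torsion_free_module R M \<longleftrightarrow> module R M \<and>
     (\<forall>b\<in>carrier R. \<forall>s\<in>carrier M. b \<odot>\<^bsub>M\<^esub> s = \<zero>\<^bsub>M\<^esub> \<and> s \<noteq> \<zero>\<^bsub>M\<^esub> \<longrightarrow> b = \<zero>\<^bsub>R\<^esub>)"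

text \<open>The free R-module R[S]: finitely supported R-valued functions on S.\<close>
definition free_mod :: "'r ring \<Rightarrow> 'a set \<Rightarrow> ('a \<Rightarrow> 'r) set" where
  "free_mod R S = {c. c \<in> S \<rightarrow>\<^sub>E carrier R \<and> finite {x\<in>S. c x \<noteq> \<zero>\<^bsub>R\<^esub>}}"

definition mult_subset :: "'r ring \<Rightarrow> 'r set \<Rightarrow> bool" where
  "mult_subset R S \<longleftrightarrow> S \<subseteq> carrier R \<and> \<one>\<^bsub>R\<^esub> \<in> S \<and> \<zero>\<^bsub>R\<^esub> \<notin> S \<and>
     (\<forall>s\<in>S. \<forall>t\<in>S. s \<otimes>\<^bsub>R\<^esub> t \<in> S)"

definition S_reduced :: "'r ring \<Rightarrow> 'r set \<Rightarrow> bool" where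
  "S_reduced R S \<longleftrightarrow> (\<Inter>s\<in>S. PIdl\<^bsub>R\<^esub> s) = {\<zero>\<^bsub>R\<^esub>}"

definition S_torsion_free :: "'r ring \<Rightarrow> 'r set \<Rightarrow> bool" where
  "S_torsion_free R S \<longleftrightarrow> (\<forall>s\<in>S. \<forall>r\<in>carrier R. s \<otimes>\<^bsub>R\<^esub> r = \<zero>\<^bsub>R\<^esub> \<longrightarrow> r = \<zero>\<^bsub>R\<^esub>)"

text \<open>The S-adic completion as the inverse limit of the R/sR (s in S, ordered by divisibility):
  compatible families of cosets x s in R/sR, i.e. x t is contained in x s whenever s divides t.\<close>
definition S_completion :: "'r ring \<Rightarrow> 'r set \<Rightarrow> ('r \<Rightarrow> 'r set) set" where
  "S_completion R S = {x. x \<in> (\<Pi>\<^sub>E s\<in>S. a_rcosets\<^bsub>R\<^esub> (PIdl\<^bsub>R\<^esub> s)) \<and>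
     (\<forall>s\<in>S. \<forall>t\<in>S. (\<exists>u\<in>carrier R. t = s \<otimes>\<^bsub>R\<^esub> u) \<longrightarrow> x t \<subseteq> x s)}"

definition compl_add :: "'r ring \<Rightarrow> 'r set \<Rightarrow> ('r \<Rightarrow> 'r set) \<Rightarrow> ('r \<Rightarrow> 'r set) \<Rightarrow> ('r \<Rightarrow> 'r set)" where
  "compl_add R S x y = (\<lambda>s\<in>S. x s <+>\<^bsub>R\<^esub> y s)"

definition compl_smult :: "'r ring \<Rightarrow> 'r set \<Rightarrow> 'r \<Rightarrow> ('r \<Rightarrow> 'r set) \<Rightarrow> ('r \<Rightarrow> 'r set)" where
  "compl_smult R S r x = (\<lambda>s\<in>S. PIdl\<^bsub>R\<^esub> s <+>\<^bsub>R\<^esub> ((\<lambda>a. r \<otimes>\<^bsub>R\<^esub> a) ` x s))"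

definition hom_completion_zero :: "'r ring \<Rightarrow> 'r set \<Rightarrow> bool" where
  "hom_completion_zero R S \<longleftrightarrow>
     (\<forall>f. f \<in> S_completion R S \<rightarrow> carrier R \<and>
          (\<forall>x\<in>S_completion R S. \<forall>y\<in>S_completion R S. f (compl_add R S x y) = f x \<oplus>\<^bsub>R\<^esub> f y) \<and>
          (\<forall>r\<in>carrier R. \<forall>x\<in>S_completion R S. f (compl_smult R S r x) = r \<otimes>\<^bsub>R\<^esub> f x)
       \<longrightarrow> (\<forall>x\<in>S_completion R S. f x = \<zero>\<^bsub>R\<^esub>))"

definition cotorsion_free :: "'r ring \<Rightarrow> bool" where
  "cotorsion_free R \<longleftrightarrow> (\<exists>S. countable S \<and> mult_subset R S \<and> S_reduced R S \<and>
       S_torsion_free R S \<and> hom_completion_zero R S)"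

text \<open>A functor from the full subcategory of graphs with object set C into torsion-free R-modules:
  GO on objects, GM gX gY on morphisms gX -> gY.\<close>
definition graph_module_functor ::
  "'r ring \<Rightarrow> 'v graph set \<Rightarrow> ('v graph \<Rightarrow> ('r, 'm) module) \<Rightarrow>
   ('v graph \<Rightarrow> 'v graph \<Rightarrow> ('v \<Rightarrow> 'v) \<Rightarrow> 'm \<Rightarrow> 'm) \<Rightarrow> bool" where
  "graph_module_functor R C GO GM \<longleftrightarrow>
     (\<forall>gX\<in>C. is_graph gX \<and> torsion_free_module R (GO gX)) \<and>
     (\<forall>gX\<in>C. \<forall>gY\<in>C. \<forall>\<phi>\<in>graph_hom gX gY.
        restrict (GM gX gY \<phi>) (carrier (GO gX)) \<in> lin_hom R (GO gX) (GO gY)) \<and>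
     (\<forall>gX\<in>C. \<forall>m\<in>carrier (GO gX). GM gX gX (restrict id (fst gX)) m = m) \<and>
     (\<forall>gX\<in>C. \<forall>gY\<in>C. \<forall>gZ\<in>C. \<forall>\<phi>\<in>graph_hom gX gY. \<forall>\<psi>\<in>graph_hom gY gZ. \<forall>m\<in>carrier (GO gX).
        GM gX gZ (restrict (\<psi> \<circ> \<phi>) (fst gX)) m = GM gY gZ \<psi> (GM gX gY \<phi> m))"

definition gamma_map ::
  "'r ring \<Rightarrow> ('v graph \<Rightarrow> ('r, 'm) module) \<Rightarrow>
   ('v graph \<Rightarrow> 'v graph \<Rightarrow> ('v \<Rightarrow> 'v) \<Rightarrow> 'm \<Rightarrow> 'm) \<Rightarrow> 'v graph \<Rightarrow> 'v graph \<Rightarrow>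
   (('v \<Rightarrow> 'v) \<Rightarrow> 'r) \<Rightarrow> 'm \<Rightarrow> 'm" where
  "gamma_map R GO GM gX gY c = (\<lambda>m\<in>carrier (GO gX).
     finsum (GO gY) (\<lambda>\<phi>. c \<phi> \<odot>\<^bsub>GO gY\<^esub> GM gX gY \<phi> m) {\<phi>\<in>graph_hom gX gY. c \<phi> \<noteq> \<zero>\<^bsub>R\<^esub>})"

definition almost_full_embedding ::
  "'r ring \<Rightarrow> 'v graph set \<Rightarrow> ('v graph \<Rightarrow> ('r, 'm) module) \<Rightarrow>
   ('v graph \<Rightarrow> 'v graph \<Rightarrow> ('v \<Rightarrow> 'v) \<Rightarrow> 'm \<Rightarrow> 'm) \<Rightarrow> bool" where
  "almost_full_embedding R C GO GM \<longleftrightarrow> graph_module_functor R C GO GM \<and>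
     (\<forall>gX\<in>C. \<forall>gY\<in>C. bij_betw (gamma_map R GO GM gX gY)
        (free_mod R (graph_hom gX gY)) (lin_hom R (GO gX) (GO gY)))"

end

theory Submission
  imports Defs
begin


primrec pseq :: "(nat \<Rightarrow> 'a set \<Rightarrow> 'a \<times> 'a) \<Rightarrow> nat \<Rightarrow> ('a \<times> 'a) list" where
  "pseq p 0 = []"
| "pseq p (Suc n) = pseq p n @ [p n (fst ` set (pseq p n) \<union> snd ` set (pseq p n))]"

lemma pseq_set: "set (pseq p n) = (\<lambda>k. p k (fst ` set (pseq p k) \<union> snd ` set (pseq p k))) ` {..<n}"
  by (induction n) (simp_all add: lessThan_Suc Un_commute)

lemma pair_seq:
  fixes P :: "nat \<Rightarrow> 'a \<Rightarrow> 'a \<Rightarrow> bool"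
  assumes ex: "\<And>n U. finite U \<Longrightarrow> \<exists>x y. P n x y \<and> x \<notin> U \<and> y \<notin> U \<and> x \<noteq> y"
  shows "\<exists>f g. (\<forall>n. P n (f n) (g n)) \<and> inj f \<and> inj g \<and> (\<forall>n m. f n \<noteq> g m)"
proof -
  define Q where "Q n U xy \<longleftrightarrow> P n (fst xy) (snd xy) \<and> fst xy \<notin> U \<and> snd xy \<notin> U \<and> fst xy \<noteq> snd xy" for n U xy
  define p where "p n U = (SOME xy. Q n U xy)" for n U
  have p: "Q n U (p n U)" if "finite U" for n U
  proof -
    from ex[OF that, of n] obtain x y where "P n x y \<and> x \<notin> U \<and> y \<notin> U \<and> x \<noteq> y" by blast
    then have "Q n U (x,y)" by (simp add: Q_def)
    then show ?thesis unfolding p_def by (rule someI)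
  qed
  define U where "U k = fst ` set (pseq p k) \<union> snd ` set (pseq p k)" for k
  have finU: "finite (U k)" for k by (simp add: U_def)
  define f where "f k = fst (p k (U k))" for k
  define g where "g k = snd (p k (U k))" for k
  have inU: "f k \<in> U n \<and> g k \<in> U n" if "k < n" for k n
  proof -
    have "p k (U k) \<in> set (pseq p n)"
      apply (subst pseq_set) apply (rule image_eqI[where x=k]) using that by (simp_all add: U_def)
    then show ?thesis unfolding U_def f_def g_def by (metis (no_types, lifting) UnI1 UnI2 image_eqI)
  qed
  have P: "P n (f n) (g n) \<and> f n \<notin> U n \<and> g n \<notin> U n \<and> f n \<noteq> g n" for n
    using p[OF finU, of n n] unfolding f_def g_def Q_def by simp
  have d: "f k \<noteq> f n \<and> g k \<noteq> g n \<and> f k \<noteq> g n \<and> g k \<noteq> f n" if "k < n" for k n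
    using inU[OF that] P[of n] by auto
  show ?thesis
  proof (intro exI conjI allI)
    show "P n (f n) (g n)" for n using P by simp
    show "inj f" unfolding inj_def
    proof (intro allI impI)
      fix x y assume "f x = f y" then show "x = y" using d[of x y] d[of y x] by (cases x y rule: linorder_cases) auto
    qed
    show "inj g" unfolding inj_def
    proof (intro allI impI)
      fix x y assume "g x = g y" then show "x = y" using d[of x y] d[of y x] by (cases x y rule: linorder_cases) auto
    qed
    show "f n \<noteq> g m" for n m using d[of n m] d[of m n] P[of n] by (cases n m rule: linorder_cases) auto
  qed
qed

locale setting = M: module R M + N: module R N
  for R :: "'r ring" and M :: "('r,'m) module" and N :: "('r,'n) module" +
  fixes H :: "'p set" and G :: "'p \<Rightarrow> 'm \<Rightarrow> 'n" and gam
  assumes G_closed: "\<phi> \<in> H \<Longrightarrow> m \<in> carrier M \<Longrightarrow> G \<phi> m \<in> carrier N"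
  and gam_def: "gam = (\<lambda>c. \<lambda>m\<in>carrier M. finsum N (\<lambda>\<phi>. c \<phi> \<odot>\<^bsub>N\<^esub> G \<phi> m) {\<phi>\<in>H. c \<phi> \<noteq> \<zero>\<^bsub>R\<^esub>})"
  and gam_bij: "bij_betw gam (free_mod R H) (lin_hom R M N)"
begin

definition "supp c = {\<phi>\<in>H. c \<phi> \<noteq> \<zero>\<^bsub>R\<^esub>}"
definition "fadd c c' = (\<lambda>\<phi>\<in>H. c \<phi> \<oplus>\<^bsub>R\<^esub> c' \<phi>)"
definition "fsm r c = (\<lambda>\<phi>\<in>H. r \<otimes>\<^bsub>R\<^esub> c \<phi>)"

lemma free_modD: assumes "c \<in> free_mod R H" shows "c \<in> H \<rightarrow>\<^sub>E carrier R" "finite (supp c)"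
  using assms by (auto simp: free_mod_def supp_def)

lemma cR: "c \<in> free_mod R H \<Longrightarrow> \<phi> \<in> H \<Longrightarrow> c \<phi> \<in> carrier R"
  by (auto simp: free_mod_def)

lemma smG: "r \<in> carrier R \<Longrightarrow> \<phi> \<in> H \<Longrightarrow> m \<in> carrier M \<Longrightarrow> r \<odot>\<^bsub>N\<^esub> G \<phi> m \<in> carrier N"
  using G_closed by auto

lemma gam_sum:
  assumes c: "c \<in> free_mod R H" and T: "finite T" "supp c \<subseteq> T" "T \<subseteq> H" and m: "m \<in> carrier M"
  shows "gam c m = finsum N (\<lambda>\<phi>. c \<phi> \<odot>\<^bsub>N\<^esub> G \<phi> m) T"
proof -
  have cc: "c \<in> H \<rightarrow>\<^sub>E carrier R" using free_modD[OF c] by auto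
  have "gam c m = finsum N (\<lambda>\<phi>. c \<phi> \<odot>\<^bsub>N\<^esub> G \<phi> m) (supp c)"
    using m by (simp add: gam_def supp_def)
  also have "\<dots> = finsum N (\<lambda>\<phi>. c \<phi> \<odot>\<^bsub>N\<^esub> G \<phi> m) T"
    apply (rule N.add.finprod_mono_neutral_cong_left)
    using T m cR[OF c] G_closed by (auto simp: supp_def intro!: smG)
  finally show ?thesis .
qed

lemma fadd_free: "c \<in> free_mod R H \<Longrightarrow> c' \<in> free_mod R H \<Longrightarrow> fadd c c' \<in> free_mod R H"
proof -
  assume c: "c \<in> free_mod R H" and c': "c' \<in> free_mod R H"
  have "{x\<in>H. fadd c c' x \<noteq> \<zero>\<^bsub>R\<^esub>} \<subseteq> supp c \<union> supp c'"
    by (auto simp: fadd_def supp_def)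
  then have "finite {x\<in>H. fadd c c' x \<noteq> \<zero>\<^bsub>R\<^esub>}" 
    using free_modD[OF c] free_modD[OF c'] by (meson finite_UnI finite_subset)
  moreover have "fadd c c' \<in> H \<rightarrow>\<^sub>E carrier R" using cR[OF c] cR[OF c'] by (auto simp: fadd_def)
  ultimately show ?thesis by (simp add: free_mod_def)
qed

lemma fsm_free: "r \<in> carrier R \<Longrightarrow> c \<in> free_mod R H \<Longrightarrow> fsm r c \<in> free_mod R H"
proof -
  assume r: "r \<in> carrier R" and c: "c \<in> free_mod R H"
  have "{x\<in>H. fsm r c x \<noteq> \<zero>\<^bsub>R\<^esub>} \<subseteq> supp c"
    using free_modD[OF c] r by (auto simp: fsm_def supp_def)
  then have "finite {x\<in>H. fsm r c x \<noteq> \<zero>\<^bsub>R\<^esub>}" 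
    using free_modD[OF c] by (meson finite_subset)
  moreover have "fsm r c \<in> H \<rightarrow>\<^sub>E carrier R" using cR[OF c] r by (auto simp: fsm_def)
  ultimately show ?thesis by (simp add: free_mod_def)
qed

lemma gam_fadd:
  assumes c: "c \<in> free_mod R H" and c': "c' \<in> free_mod R H" and m: "m \<in> carrier M"
  shows "gam (fadd c c') m = gam c m \<oplus>\<^bsub>N\<^esub> gam c' m"
proof -
  let ?T = "supp c \<union> supp c'"
  have fin: "finite ?T" using free_modD[OF c] free_modD[OF c'] by auto
  have sub: "supp (fadd c c') \<subseteq> ?T" by (auto simp: fadd_def supp_def)
  have cc: "c \<in> H \<rightarrow>\<^sub>E carrier R" "c' \<in> H \<rightarrow>\<^sub>E carrier R" using free_modD c c' by auto
  have TH: "?T \<subseteq> H" by (auto simp: supp_def)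
  have "gam (fadd c c') m = finsum N (\<lambda>\<phi>. fadd c c' \<phi> \<odot>\<^bsub>N\<^esub> G \<phi> m) ?T"
    by (rule gam_sum[OF fadd_free[OF c c'] fin sub TH m])
  also have "\<dots> = finsum N (\<lambda>\<phi>. c \<phi> \<odot>\<^bsub>N\<^esub> G \<phi> m \<oplus>\<^bsub>N\<^esub> c' \<phi> \<odot>\<^bsub>N\<^esub> G \<phi> m) ?T"
    apply (rule N.add.finprod_cong')
    using TH cR[OF c] cR[OF c'] G_closed m by (auto simp: fadd_def N.smult_l_distr)
  also have "\<dots> = finsum N (\<lambda>\<phi>. c \<phi> \<odot>\<^bsub>N\<^esub> G \<phi> m) ?T \<oplus>\<^bsub>N\<^esub> finsum N (\<lambda>\<phi>. c' \<phi> \<odot>\<^bsub>N\<^esub> G \<phi> m) ?T"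
    apply (rule N.add.finprod_multf)
    using TH cR[OF c] cR[OF c'] m by (auto intro!: smG)
  also have "\<dots> = gam c m \<oplus>\<^bsub>N\<^esub> gam c' m"
    using gam_sum[OF c fin _ TH m] gam_sum[OF c' fin _ TH m] by auto
  finally show ?thesis .
qed

lemma gam_fsm:
  assumes r: "r \<in> carrier R" and c: "c \<in> free_mod R H" and m: "m \<in> carrier M"
  shows "gam (fsm r c) m = r \<odot>\<^bsub>N\<^esub> gam c m"
proof -
  let ?T = "supp c"
  have fin: "finite ?T" using free_modD[OF c] by auto
  have cc: "c \<in> H \<rightarrow>\<^sub>E carrier R" using free_modD c by auto
  have sub: "supp (fsm r c) \<subseteq> ?T" using cc r by (auto simp: fsm_def supp_def)
  have TH: "?T \<subseteq> H" by (auto simp: supp_def)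
  have "gam (fsm r c) m = finsum N (\<lambda>\<phi>. fsm r c \<phi> \<odot>\<^bsub>N\<^esub> G \<phi> m) ?T"
    by (rule gam_sum[OF fsm_free[OF r c] fin sub TH m])
  also have "\<dots> = finsum N (\<lambda>\<phi>. r \<odot>\<^bsub>N\<^esub> (c \<phi> \<odot>\<^bsub>N\<^esub> G \<phi> m)) ?T"
    apply (rule N.add.finprod_cong')
    using TH cR[OF c] G_closed m r by (auto simp: fsm_def N.smult_assoc1)
  also have "\<dots> = r \<odot>\<^bsub>N\<^esub> finsum N (\<lambda>\<phi>. c \<phi> \<odot>\<^bsub>N\<^esub> G \<phi> m) ?T"
    apply (rule N.finsum_smult_ldistr[symmetric])
    using TH cR[OF c] m r fin by (auto intro!: smG)
  also have "\<dots> = r \<odot>\<^bsub>N\<^esub> gam c m"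
    using gam_sum[OF c fin _ TH m] by auto
  finally show ?thesis .
qed

definition "cinv h = the_inv_into (free_mod R H) gam h"

lemma cinv: "h \<in> lin_hom R M N \<Longrightarrow> cinv h \<in> free_mod R H \<and> gam (cinv h) = h"
  unfolding cinv_def using gam_bij
  by (metis bij_betw_def f_the_inv_into_f the_inv_into_into order_refl)

lemma cinv_gam: "c \<in> free_mod R H \<Longrightarrow> cinv (gam c) = c"
  unfolding cinv_def using gam_bij by (metis bij_betw_def the_inv_into_f_f)

lemma gam_ext: "gam c \<in> extensional (carrier M)" by (simp add: gam_def)

lemma cinv_add:
  assumes h: "h \<in> lin_hom R M N" and h': "h' \<in> lin_hom R M N" and h'': "h'' \<in> lin_hom R M N"
    and eq: "\<And>m. m \<in> carrier M \<Longrightarrow> h'' m = h m \<oplus>\<^bsub>N\<^esub> h' m"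
  shows "cinv h'' = fadd (cinv h) (cinv h')"
proof -
  have "gam (fadd (cinv h) (cinv h')) = h''"
  proof (rule extensionalityI[OF gam_ext])
    show "h'' \<in> extensional (carrier M)" using h'' by (auto simp: lin_hom_def PiE_def)
    fix m assume "m \<in> carrier M"
    then show "gam (fadd (cinv h) (cinv h')) m = h'' m"
      using gam_fadd cinv h h' eq by metis
  qed
  then show ?thesis using cinv_gam fadd_free cinv h h' by metis
qed

lemma cinv_sm:
  assumes r: "r \<in> carrier R" and h: "h \<in> lin_hom R M N" and h'': "h'' \<in> lin_hom R M N"
    and eq: "\<And>m. m \<in> carrier M \<Longrightarrow> h'' m = r \<odot>\<^bsub>N\<^esub> h m"
  shows "cinv h'' = fsm r (cinv h)"
proof -
  have "gam (fsm r (cinv h)) = h''"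
  proof (rule extensionalityI[OF gam_ext])
    show "h'' \<in> extensional (carrier M)" using h'' by (auto simp: lin_hom_def PiE_def)
    fix m assume "m \<in> carrier M"
    then show "gam (fsm r (cinv h)) m = h'' m"
      using gam_fsm cinv h r eq by metis
  qed
  then show ?thesis using cinv_gam fsm_free cinv h r by metis
qed

end


locale setting2 = setting +
  fixes S
  assumes cM: "countable (carrier M)" and cN: "countable (carrier N)" and uH: "\<not> countable H"
  and cS: "countable S" and mS: "mult_subset R S" and rS: "S_reduced R S"
  and hS: "hom_completion_zero R S"
begin

definition "mm i = from_nat_into (carrier M) i"
definition "idx m = to_nat_on (carrier M) m"

lemma mm_in: "mm i \<in> carrier M"
  unfolding mm_def by (rule from_nat_into) auto

lemma mm_idx: "m \<in> carrier M \<Longrightarrow> mm (idx m) = m"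
  unfolding mm_def idx_def using cM by simp

definition "vals n \<phi> = map (\<lambda>i. G \<phi> (mm i)) [0..<n]"

lemma vals_lists: "\<phi> \<in> H \<Longrightarrow> vals n \<phi> \<in> lists (carrier N)"
  unfolding vals_def using G_closed mm_in by auto

lemma pairs_exist: "finite U \<Longrightarrow> \<exists>x y. (x \<in> H \<and> y \<in> H \<and> vals n x = vals n y) \<and> x \<notin> U \<and> y \<notin> U \<and> x \<noteq> y"
proof (rule ccontr)
  assume U: "finite U" and no: "\<not> (\<exists>x y. (x \<in> H \<and> y \<in> H \<and> vals n x = vals n y) \<and> x \<notin> U \<and> y \<notin> U \<and> x \<noteq> y)"
  have "inj_on (vals n) (H - U)" unfolding inj_on_def using no by blast
  moreover have "countable (vals n ` (H - U))"
    by (rule countable_subset[of _ "lists (carrier N)"]) (use vals_lists cN in auto)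
  ultimately have "countable (H - U)" using countable_image_inj_on by blast
  then have "countable (H - U \<union> U)" using U countable_Un countable_finite by blast
  moreover have "H \<subseteq> H - U \<union> U" by blast
  ultimately show False using uH countable_subset by blast
qed

definition "BP fg \<longleftrightarrow> (\<forall>n. (fst fg n \<in> H \<and> snd fg n \<in> H \<and> vals n (fst fg n) = vals n (snd fg n))) \<and>
   inj (fst fg) \<and> inj (snd fg) \<and> (\<forall>n m. fst fg n \<noteq> snd fg m)"

lemma BP_ex: "\<exists>fg. BP fg"
proof -
  obtain f g where "(\<forall>n. (f n \<in> H \<and> g n \<in> H \<and> vals n (f n) = vals n (g n))) \<and> inj f \<and> inj g \<and> (\<forall>n m. f n \<noteq> g m)"
    using pair_seq[where P="\<lambda>n x y. x \<in> H \<and> y \<in> H \<and> vals n x = vals n y", OF pairs_exist] by blast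
  then have "BP (f, g)" by (simp add: BP_def)
  then show ?thesis by blast
qed

definition "b = fst (SOME fg. BP fg)"
definition "b' = snd (SOME fg. BP fg)"

lemma BP: "BP (b, b')"
  unfolding b_def b'_def using someI_ex[OF BP_ex] by simp

lemma BP': "(\<forall>n. (b n \<in> H \<and> b' n \<in> H \<and> vals n (b n) = vals n (b' n))) \<and>
   inj b \<and> inj b' \<and> (\<forall>n m. b n \<noteq> b' m)"
  using BP unfolding BP_def fst_conv snd_conv .

lemma b_H: "b n \<in> H" "b' n \<in> H" and b_vals: "vals n (b n) = vals n (b' n)"
  and b_inj: "inj b" and b'_inj: "inj b'" and bb': "b n \<noteq> b' m"
  using BP' by blast+

definition "Dl n = (\<lambda>\<phi>\<in>H. if \<phi> = b n then \<one>\<^bsub>R\<^esub> else if \<phi> = b' n then \<ominus>\<^bsub>R\<^esub> \<one>\<^bsub>R\<^esub> else \<zero>\<^bsub>R\<^esub>)"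

lemma Dl_free: "Dl n \<in> free_mod R H"
proof -
  have "{x\<in>H. Dl n x \<noteq> \<zero>\<^bsub>R\<^esub>} \<subseteq> {b n, b' n}" unfolding Dl_def by auto
  then have "finite {x\<in>H. Dl n x \<noteq> \<zero>\<^bsub>R\<^esub>}" by (rule finite_subset) auto
  moreover have "Dl n \<in> H \<rightarrow>\<^sub>E carrier R" unfolding Dl_def restrict_PiE_iff by auto
  ultimately show ?thesis by (simp add: free_mod_def)
qed

definition "d n = gam (Dl n)"

lemma d_lin: "d n \<in> lin_hom R M N"
  unfolding d_def by (rule bij_betw_apply[OF gam_bij Dl_free])

lemma d_val: assumes m: "m \<in> carrier M"
  shows "d n m = G (b n) m \<oplus>\<^bsub>N\<^esub> (\<ominus>\<^bsub>N\<^esub> G (b' n) m)"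
proof -
  have ne: "b n \<noteq> b' n" using bb' by auto
  have sub: "supp (Dl n) \<subseteq> {b n, b' n}" by (auto simp: supp_def Dl_def)
  have "d n m = finsum N (\<lambda>\<phi>. Dl n \<phi> \<odot>\<^bsub>N\<^esub> G \<phi> m) {b n, b' n}"
    unfolding d_def by (rule gam_sum[OF Dl_free _ sub _ m]) (use b_H in auto)
  also have "\<dots> = Dl n (b n) \<odot>\<^bsub>N\<^esub> G (b n) m \<oplus>\<^bsub>N\<^esub> finsum N (\<lambda>\<phi>. Dl n \<phi> \<odot>\<^bsub>N\<^esub> G \<phi> m) {b' n}"
    apply (rule N.finsum_insert) using ne b_H m cR[OF Dl_free] by (auto intro!: smG)
  also have "\<dots> = G (b n) m \<oplus>\<^bsub>N\<^esub> (\<ominus>\<^bsub>N\<^esub> G (b' n) m)"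
    using ne b_H m G_closed by (simp add: Dl_def N.smult_l_minus)
  finally show ?thesis .
qed

lemma d_vanish: assumes m: "m \<in> carrier M" and lt: "idx m < n" shows "d n m = \<zero>\<^bsub>N\<^esub>"
proof -
  have "vals n (b n) ! idx m = vals n (b' n) ! idx m" using b_vals by simp
  then have "G (b n) (mm (idx m)) = G (b' n) (mm (idx m))" using lt by (simp add: vals_def)
  then have "G (b n) m = G (b' n) m" using mm_idx[OF m] by simp
  then show ?thesis using d_val[OF m] G_closed[OF b_H(2) m] by (simp add: N.r_neg)
qed

end


context setting2 begin

lemma d_closed: "m \<in> carrier M \<Longrightarrow> d n m \<in> carrier N"
  using d_lin[of n] by (auto simp: lin_hom_def)

lemma d_add: "x \<in> carrier M \<Longrightarrow> y \<in> carrier M \<Longrightarrow> d n (x \<oplus>\<^bsub>M\<^esub> y) = d n x \<oplus>\<^bsub>N\<^esub> d n y"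
  using d_lin[of n] by (auto simp: lin_hom_def)

lemma d_sm: "r \<in> carrier R \<Longrightarrow> x \<in> carrier M \<Longrightarrow> d n (r \<odot>\<^bsub>M\<^esub> x) = r \<odot>\<^bsub>N\<^esub> d n x"
  using d_lin[of n] by (auto simp: lin_hom_def)

definition "Ps a K m = finsum N (\<lambda>n. a n \<odot>\<^bsub>N\<^esub> d n m) {..<K}"
definition "Phi a = (\<lambda>m\<in>carrier M. Ps a (Suc (idx m)) m)"

lemma Ps_closed: "(\<And>n. a n \<in> carrier R) \<Longrightarrow> m \<in> carrier M \<Longrightarrow> Ps a K m \<in> carrier N"
  unfolding Ps_def by (rule N.finsum_closed) (auto intro: d_closed)

lemma Ps_Suc: assumes "\<And>n. a n \<in> carrier R" "m \<in> carrier M"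
  shows "Ps a (Suc K) m = a K \<odot>\<^bsub>N\<^esub> d K m \<oplus>\<^bsub>N\<^esub> Ps a K m"
  unfolding Ps_def lessThan_Suc
  by (rule N.finsum_insert) (use assms in \<open>auto intro: d_closed\<close>)

lemma Ps_stable: assumes a: "\<And>n. a n \<in> carrier R" and m: "m \<in> carrier M" and K: "Suc (idx m) \<le> K"
  shows "Ps a K m = Ps a (Suc (idx m)) m"
  using K
proof (induction K rule: dec_induct)
  case base then show ?case by simp
next
  case (step K)
  have "d K m = \<zero>\<^bsub>N\<^esub>" using step(1) by (intro d_vanish[OF m]) simp
  then show ?case using Ps_Suc[OF a m, where K=K] step Ps_closed[OF a m] a by simp
qed

lemma Phi_eq: "(\<And>n. a n \<in> carrier R) \<Longrightarrow> m \<in> carrier M \<Longrightarrow> Suc (idx m) \<le> K \<Longrightarrow> Phi a m = Ps a K m"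
proof -
  assume a: "\<And>n. a n \<in> carrier R" and m: "m \<in> carrier M" and K: "Suc (idx m) \<le> K"
  have "Phi a m = Ps a (Suc (idx m)) m" unfolding Phi_def using m by simp
  also have "\<dots> = Ps a K m" using Ps_stable[OF a m K] by (rule sym)
  finally show ?thesis .
qed

lemma Ps_add_m: assumes a: "\<And>n. a n \<in> carrier R" and x: "x \<in> carrier M" and y: "y \<in> carrier M"
  shows "Ps a K (x \<oplus>\<^bsub>M\<^esub> y) = Ps a K x \<oplus>\<^bsub>N\<^esub> Ps a K y"
proof -
  have "Ps a K (x \<oplus>\<^bsub>M\<^esub> y) = finsum N (\<lambda>n. a n \<odot>\<^bsub>N\<^esub> d n x \<oplus>\<^bsub>N\<^esub> a n \<odot>\<^bsub>N\<^esub> d n y) {..<K}"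
    unfolding Ps_def
    by (rule N.add.finprod_cong') (use a x y in \<open>auto simp: d_add N.smult_r_distr d_closed\<close>)
  also have "\<dots> = Ps a K x \<oplus>\<^bsub>N\<^esub> Ps a K y"
    unfolding Ps_def by (rule N.add.finprod_multf) (use a x y in \<open>auto intro: d_closed\<close>)
  finally show ?thesis .
qed

lemma Ps_sm_m: assumes a: "\<And>n. a n \<in> carrier R" and r: "r \<in> carrier R" and x: "x \<in> carrier M"
  shows "Ps a K (r \<odot>\<^bsub>M\<^esub> x) = r \<odot>\<^bsub>N\<^esub> Ps a K x"
proof -
  have "Ps a K (r \<odot>\<^bsub>M\<^esub> x) = finsum N (\<lambda>n. r \<odot>\<^bsub>N\<^esub> (a n \<odot>\<^bsub>N\<^esub> d n x)) {..<K}"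
    unfolding Ps_def
  proof (rule N.add.finprod_cong')
    fix n assume "n \<in> {..<K}"
    have "a n \<odot>\<^bsub>N\<^esub> d n (r \<odot>\<^bsub>M\<^esub> x) = (a n \<otimes>\<^bsub>R\<^esub> r) \<odot>\<^bsub>N\<^esub> d n x"
      using a r x by (simp add: d_sm N.smult_assoc1 d_closed)
    also have "\<dots> = (r \<otimes>\<^bsub>R\<^esub> a n) \<odot>\<^bsub>N\<^esub> d n x" using a r by (simp add: M.m_comm)
    also have "\<dots> = r \<odot>\<^bsub>N\<^esub> (a n \<odot>\<^bsub>N\<^esub> d n x)" using a r x by (simp add: N.smult_assoc1 d_closed)
    finally show "a n \<odot>\<^bsub>N\<^esub> d n (r \<odot>\<^bsub>M\<^esub> x) = r \<odot>\<^bsub>N\<^esub> (a n \<odot>\<^bsub>N\<^esub> d n x)" .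
  qed (use a r x in \<open>auto intro: d_closed\<close>)
  also have "\<dots> = r \<odot>\<^bsub>N\<^esub> Ps a K x"
    unfolding Ps_def by (rule N.finsum_smult_ldistr[symmetric]) (use a r x in \<open>auto intro: d_closed\<close>)
  finally show ?thesis .
qed

lemma Phi_lin: assumes a: "\<And>n. a n \<in> carrier R" shows "Phi a \<in> lin_hom R M N"
  unfolding lin_hom_def mem_Collect_eq
proof (intro conjI ballI)
  show "Phi a \<in> carrier M \<rightarrow>\<^sub>E carrier N"
    unfolding Phi_def using Ps_closed[OF a] by auto
  show "Phi a (x \<oplus>\<^bsub>M\<^esub> y) = Phi a x \<oplus>\<^bsub>N\<^esub> Phi a y" if x: "x \<in> carrier M" and y: "y \<in> carrier M" for x y
  proof -
    define K where "K = Suc (idx x) + Suc (idx y) + Suc (idx (x \<oplus>\<^bsub>M\<^esub> y))"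
    have xy: "x \<oplus>\<^bsub>M\<^esub> y \<in> carrier M" using x y by simp
    show ?thesis using Phi_eq[OF a xy, where K=K] Phi_eq[OF a x, where K=K] Phi_eq[OF a y, where K=K] Ps_add_m[OF a x y, where K=K]
      unfolding K_def by simp
  qed
  show "Phi a (r \<odot>\<^bsub>M\<^esub> x) = r \<odot>\<^bsub>N\<^esub> Phi a x" if r: "r \<in> carrier R" and x: "x \<in> carrier M" for r x
  proof -
    define K where "K = Suc (idx x) + Suc (idx (r \<odot>\<^bsub>M\<^esub> x))"
    have rx: "r \<odot>\<^bsub>M\<^esub> x \<in> carrier M" using x r by simp
    show ?thesis using Phi_eq[OF a rx, where K=K] Phi_eq[OF a x, where K=K] Ps_sm_m[OF a r x, where K=K]
      unfolding K_def by simp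
  qed
qed

lemma Ps_add_a: assumes a: "\<And>n. a n \<in> carrier R" and a': "\<And>n. a' n \<in> carrier R" and m: "m \<in> carrier M"
  shows "Ps (\<lambda>n. a n \<oplus>\<^bsub>R\<^esub> a' n) K m = Ps a K m \<oplus>\<^bsub>N\<^esub> Ps a' K m"
proof -
  have "Ps (\<lambda>n. a n \<oplus>\<^bsub>R\<^esub> a' n) K m = finsum N (\<lambda>n. a n \<odot>\<^bsub>N\<^esub> d n m \<oplus>\<^bsub>N\<^esub> a' n \<odot>\<^bsub>N\<^esub> d n m) {..<K}"
    unfolding Ps_def
    by (rule N.add.finprod_cong') (use a a' m in \<open>auto simp: N.smult_l_distr d_closed\<close>)
  also have "\<dots> = Ps a K m \<oplus>\<^bsub>N\<^esub> Ps a' K m"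
    unfolding Ps_def by (rule N.add.finprod_multf) (use a a' m in \<open>auto intro: d_closed\<close>)
  finally show ?thesis .
qed

lemma Ps_sm_a: assumes a: "\<And>n. a n \<in> carrier R" and r: "r \<in> carrier R" and m: "m \<in> carrier M"
  shows "Ps (\<lambda>n. r \<otimes>\<^bsub>R\<^esub> a n) K m = r \<odot>\<^bsub>N\<^esub> Ps a K m"
proof -
  have "Ps (\<lambda>n. r \<otimes>\<^bsub>R\<^esub> a n) K m = finsum N (\<lambda>n. r \<odot>\<^bsub>N\<^esub> (a n \<odot>\<^bsub>N\<^esub> d n m)) {..<K}"
    unfolding Ps_def
    by (rule N.add.finprod_cong') (use a r m in \<open>auto simp: N.smult_assoc1 d_closed\<close>)
  also have "\<dots> = r \<odot>\<^bsub>N\<^esub> Ps a K m"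
    unfolding Ps_def by (rule N.finsum_smult_ldistr[symmetric]) (use a r m in \<open>auto intro: d_closed\<close>)
  finally show ?thesis .
qed

lemma Phi_add_a: assumes a: "\<And>n. a n \<in> carrier R" and a': "\<And>n. a' n \<in> carrier R" and m: "m \<in> carrier M"
  shows "Phi (\<lambda>n. a n \<oplus>\<^bsub>R\<^esub> a' n) m = Phi a m \<oplus>\<^bsub>N\<^esub> Phi a' m"
  using Ps_add_a[OF a a' m] m by (simp add: Phi_def)

lemma Phi_sm_a: assumes a: "\<And>n. a n \<in> carrier R" and r: "r \<in> carrier R" and m: "m \<in> carrier M"
  shows "Phi (\<lambda>n. r \<otimes>\<^bsub>R\<^esub> a n) m = r \<odot>\<^bsub>N\<^esub> Phi a m"
  using Ps_sm_a[OF a r m] m by (simp add: Phi_def)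

definition "e n = (\<lambda>k. if k = n then \<one>\<^bsub>R\<^esub> else \<zero>\<^bsub>R\<^esub>)"

lemma e_R: "e n k \<in> carrier R" by (simp add: e_def)

lemma Phi_e: "Phi (e n) = d n"
proof (rule extensionalityI)
  show "Phi (e n) \<in> extensional (carrier M)" by (simp add: Phi_def)
  show "d n \<in> extensional (carrier M)" using d_lin[of n] by (auto simp: lin_hom_def PiE_def)
  fix m assume m: "m \<in> carrier M"
  define K where "K = Suc (idx m) + Suc n"
  have "Phi (e n) m = Ps (e n) K m" by (rule Phi_eq[OF e_R m]) (simp add: K_def)
  also have "\<dots> = finsum N (\<lambda>k. if n = k then d k m else \<zero>\<^bsub>N\<^esub>) {..<K}"
    unfolding Ps_def by (rule N.add.finprod_cong') (use m in \<open>auto simp: e_def d_closed\<close>)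
  also have "\<dots> = d n m"
    by (rule N.add.finprod_singleton) (use m in \<open>auto simp: K_def d_closed\<close>)
  finally show "Phi (e n) m = d n m" .
qed

end


primrec qp :: "('a, 'b) ring_scheme \<Rightarrow> (nat \<Rightarrow> 'a) \<Rightarrow> nat \<Rightarrow> 'a" where
  "qp R s 0 = s 0"
| "qp R s (Suc n) = qp R s n \<otimes>\<^bsub>R\<^esub> s (Suc n)"

context setting2 begin

definition "c a = cinv (Phi a)"

lemma c_props: "(\<And>n. a n \<in> carrier R) \<Longrightarrow> c a \<in> free_mod R H \<and> gam (c a) = Phi a"
  unfolding c_def using cinv Phi_lin by blast

lemma c_add: assumes a: "\<And>n. a n \<in> carrier R" and a': "\<And>n. a' n \<in> carrier R"
  shows "c (\<lambda>n. a n \<oplus>\<^bsub>R\<^esub> a' n) = fadd (c a) (c a')"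
  unfolding c_def
  by (rule cinv_add[OF Phi_lin[OF a] Phi_lin[OF a'] Phi_lin Phi_add_a[OF a a']]) (use a a' in auto)

lemma c_sm: assumes a: "\<And>n. a n \<in> carrier R" and r: "r \<in> carrier R"
  shows "c (\<lambda>n. r \<otimes>\<^bsub>R\<^esub> a n) = fsm r (c a)"
  unfolding c_def
  by (rule cinv_sm[OF r Phi_lin[OF a] Phi_lin Phi_sm_a[OF a r]]) (use a r in auto)

lemma c_e: "c (e n) = Dl n"
  unfolding c_def Phi_e d_def by (rule cinv_gam[OF Dl_free])

definition "g j a = c a (b j) \<ominus>\<^bsub>R\<^esub> a j"

lemma cb_R: "(\<And>n. a n \<in> carrier R) \<Longrightarrow> c a (b j) \<in> carrier R"
  using c_props cR b_H by blast

lemma g_R: "(\<And>n. a n \<in> carrier R) \<Longrightarrow> g j a \<in> carrier R"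
  unfolding g_def using cb_R by simp

lemma g_add: assumes a: "\<And>n. a n \<in> carrier R" and a': "\<And>n. a' n \<in> carrier R"
  shows "g j (\<lambda>n. a n \<oplus>\<^bsub>R\<^esub> a' n) = g j a \<oplus>\<^bsub>R\<^esub> g j a'"
proof -
  have "c (\<lambda>n. a n \<oplus>\<^bsub>R\<^esub> a' n) (b j) = c a (b j) \<oplus>\<^bsub>R\<^esub> c a' (b j)"
    unfolding c_add[OF a a'] fadd_def using b_H by simp
  moreover have "c a (b j) \<in> carrier R" "c a' (b j) \<in> carrier R" "a j \<in> carrier R" "a' j \<in> carrier R"
    using cb_R a a' by auto
  ultimately show ?thesis unfolding g_def by algebra
qed

lemma g_sm: assumes a: "\<And>n. a n \<in> carrier R" and r: "r \<in> carrier R"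
  shows "g j (\<lambda>n. r \<otimes>\<^bsub>R\<^esub> a n) = r \<otimes>\<^bsub>R\<^esub> g j a"
proof -
  have "c (\<lambda>n. r \<otimes>\<^bsub>R\<^esub> a n) (b j) = r \<otimes>\<^bsub>R\<^esub> c a (b j)"
    unfolding c_sm[OF a r] fsm_def using b_H by simp
  moreover have "c a (b j) \<in> carrier R" "a j \<in> carrier R"
    using cb_R a by auto
  ultimately show ?thesis unfolding g_def using r by algebra
qed

lemma g_e: "g j (e n) = \<zero>\<^bsub>R\<^esub>"
proof -
  have "b j \<noteq> b' n" using bb' by simp
  moreover have "b j = b n \<longleftrightarrow> j = n" using b_inj by (auto dest: injD)
  ultimately have "Dl n (b j) = e n j" unfolding Dl_def e_def using b_H by auto
  then have "c (e n) (b j) = e n j" by (simp add: c_e)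
  then show ?thesis unfolding g_def using e_R[of n j] by (simp add: M.minus_eq M.r_neg)
qed

lemma g_zero: "g j (\<lambda>n. \<zero>\<^bsub>R\<^esub>) = \<zero>\<^bsub>R\<^esub>"
proof -
  have eq: "(\<lambda>n. \<zero>\<^bsub>R\<^esub> \<otimes>\<^bsub>R\<^esub> e 0 n) = (\<lambda>n. \<zero>\<^bsub>R\<^esub>)" by (simp add: e_R)
  have "g j (\<lambda>n. \<zero>\<^bsub>R\<^esub>) = g j (\<lambda>n. \<zero>\<^bsub>R\<^esub> \<otimes>\<^bsub>R\<^esub> e 0 n)" by (simp only: eq)
  also have "\<dots> = \<zero>\<^bsub>R\<^esub> \<otimes>\<^bsub>R\<^esub> g j (e 0)"
    by (rule g_sm) (auto simp: e_R)
  also have "\<dots> = \<zero>\<^bsub>R\<^esub>" by (simp add: g_e)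
  finally show ?thesis .
qed

definition "tr k a = (\<lambda>n. if n < k then a n else \<zero>\<^bsub>R\<^esub>)"

lemma g_tr: assumes a: "\<And>n. a n \<in> carrier R" shows "g j (tr k a) = \<zero>\<^bsub>R\<^esub>"
proof (induction k)
  case 0
  have "tr 0 a = (\<lambda>n. \<zero>\<^bsub>R\<^esub>)" by (simp add: tr_def)
  then show ?case using g_zero by simp
next
  case (Suc k)
  have trR: "\<And>n. tr k a n \<in> carrier R" using a by (simp add: tr_def)
  have eR: "\<And>n. a k \<otimes>\<^bsub>R\<^esub> e k n \<in> carrier R" by (intro M.m_closed a e_R)
  have "tr (Suc k) a = (\<lambda>n. tr k a n \<oplus>\<^bsub>R\<^esub> a k \<otimes>\<^bsub>R\<^esub> e k n)"
  proof (rule ext)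
    fix n show "tr (Suc k) a n = tr k a n \<oplus>\<^bsub>R\<^esub> a k \<otimes>\<^bsub>R\<^esub> e k n"
    proof (cases "n < k")
      case True then show ?thesis using a[of n] a[of k] by (simp add: tr_def e_def)
    next
      case False
      then have "n = k \<or> k < n" by linarith
      then show ?thesis using a[of n] a[of k] False by (auto simp: tr_def e_def)
    qed
  qed
  then have "g j (tr (Suc k) a) = g j (tr k a) \<oplus>\<^bsub>R\<^esub> g j (\<lambda>n. a k \<otimes>\<^bsub>R\<^esub> e k n)"
    using g_add[OF trR eR] by simp
  also have "g j (\<lambda>n. a k \<otimes>\<^bsub>R\<^esub> e k n) = a k \<otimes>\<^bsub>R\<^esub> g j (e k)"
    by (rule g_sm) (use a e_R in auto)
  finally show ?case using Suc g_e a by simp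
qed

definition "sS i = from_nat_into S i"
definition "q = qp R sS"

lemma S_props: "S \<subseteq> carrier R" "\<one>\<^bsub>R\<^esub> \<in> S" "\<zero>\<^bsub>R\<^esub> \<notin> S" "s \<in> S \<Longrightarrow> t \<in> S \<Longrightarrow> s \<otimes>\<^bsub>R\<^esub> t \<in> S"
  using mS unfolding mult_subset_def by auto

lemma sS_in: "sS i \<in> S"
  unfolding sS_def by (rule from_nat_into) (use S_props in auto)

lemma q_in: "q n \<in> S"
proof (induction n)
  case 0 then show ?case by (simp add: q_def sS_in)
next
  case (Suc n) then show ?case unfolding q_def qp.simps by (intro S_props(4) sS_in) (simp add: q_def)
qed

lemma q_R: "q n \<in> carrier R" using q_in S_props by auto

lemma q_dvd: "k \<le> n \<Longrightarrow> \<exists>u\<in>carrier R. q n = q k \<otimes>\<^bsub>R\<^esub> u"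
proof (induction n rule: dec_induct)
  case base then show ?case using q_R by (intro bexI[of _ "\<one>\<^bsub>R\<^esub>"]) auto
next
  case (step n)
  then obtain u where u: "u \<in> carrier R" "q n = q k \<otimes>\<^bsub>R\<^esub> u" by blast
  have sR: "sS (Suc n) \<in> carrier R" using sS_in S_props by auto
  have "q (Suc n) = q k \<otimes>\<^bsub>R\<^esub> (u \<otimes>\<^bsub>R\<^esub> sS (Suc n))"
    using u sR q_R by (simp add: q_def M.m_assoc[symmetric])
  then show ?case using u sR by auto
qed

lemma q_PIdl_s: "s \<in> S \<Longrightarrow> \<exists>j. q j \<in> PIdl\<^bsub>R\<^esub> s"
proof -
  assume s: "s \<in> S"
  obtain j where j: "sS j = s" using from_nat_into_surj[OF cS s] unfolding sS_def by blast
  have sR: "s \<in> carrier R" using s S_props by auto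
  have "q j \<in> PIdl\<^bsub>R\<^esub> s"
  proof (cases j)
    case 0 then show ?thesis using j sR by (simp add: q_def M.cgenideal_self)
  next
    case (Suc i)
    then have "q j = q i \<otimes>\<^bsub>R\<^esub> s" using j by (simp add: q_def)
    then show ?thesis using q_R by (auto simp: cgenideal_def)
  qed
  then show ?thesis by blast
qed

lemma PIdl_mono: "x \<in> carrier R \<Longrightarrow> y \<in> PIdl\<^bsub>R\<^esub> x \<Longrightarrow> PIdl\<^bsub>R\<^esub> y \<subseteq> PIdl\<^bsub>R\<^esub> x"
  by (rule M.cgenideal_minimal[OF M.cgenideal_ideal])

end


context setting2 begin

lemma PI_iff: "y \<in> PIdl\<^bsub>R\<^esub> s \<longleftrightarrow> (\<exists>x\<in>carrier R. y = x \<otimes>\<^bsub>R\<^esub> s)"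
  by (auto simp: cgenideal_def)

lemma PI_R: "s \<in> carrier R \<Longrightarrow> y \<in> PIdl\<^bsub>R\<^esub> s \<Longrightarrow> y \<in> carrier R"
  by (auto simp: cgenideal_def)

lemma PI_add: assumes s: "s \<in> carrier R" and y: "y \<in> PIdl\<^bsub>R\<^esub> s" and z: "z \<in> PIdl\<^bsub>R\<^esub> s"
  shows "y \<oplus>\<^bsub>R\<^esub> z \<in> PIdl\<^bsub>R\<^esub> s"
proof -
  obtain x x' where "x \<in> carrier R" "x' \<in> carrier R" "y = x \<otimes>\<^bsub>R\<^esub> s" "z = x' \<otimes>\<^bsub>R\<^esub> s"
    using y z by (auto simp: PI_iff)
  moreover have "x \<otimes>\<^bsub>R\<^esub> s \<oplus>\<^bsub>R\<^esub> x' \<otimes>\<^bsub>R\<^esub> s = (x \<oplus>\<^bsub>R\<^esub> x') \<otimes>\<^bsub>R\<^esub> s"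
    using calculation s by algebra
  ultimately show ?thesis by (auto simp: PI_iff)
qed

lemma PI_minus: assumes s: "s \<in> carrier R" and y: "y \<in> PIdl\<^bsub>R\<^esub> s" and z: "z \<in> PIdl\<^bsub>R\<^esub> s"
  shows "y \<ominus>\<^bsub>R\<^esub> z \<in> PIdl\<^bsub>R\<^esub> s"
proof -
  obtain x x' where "x \<in> carrier R" "x' \<in> carrier R" "y = x \<otimes>\<^bsub>R\<^esub> s" "z = x' \<otimes>\<^bsub>R\<^esub> s"
    using y z by (auto simp: PI_iff)
  moreover have "x \<otimes>\<^bsub>R\<^esub> s \<ominus>\<^bsub>R\<^esub> x' \<otimes>\<^bsub>R\<^esub> s = (x \<ominus>\<^bsub>R\<^esub> x') \<otimes>\<^bsub>R\<^esub> s"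
    using calculation s by algebra
  ultimately show ?thesis by (auto simp: PI_iff)
qed

lemma PI_mult: assumes s: "s \<in> carrier R" and r: "r \<in> carrier R" and y: "y \<in> PIdl\<^bsub>R\<^esub> s"
  shows "r \<otimes>\<^bsub>R\<^esub> y \<in> PIdl\<^bsub>R\<^esub> s"
proof -
  obtain x where "x \<in> carrier R" "y = x \<otimes>\<^bsub>R\<^esub> s"
    using y by (auto simp: PI_iff)
  moreover have "r \<otimes>\<^bsub>R\<^esub> (x \<otimes>\<^bsub>R\<^esub> s) = (r \<otimes>\<^bsub>R\<^esub> x) \<otimes>\<^bsub>R\<^esub> s"
    using calculation s r by algebra
  ultimately show ?thesis using r by (auto simp: PI_iff)
qed

lemma PI_zero: "s \<in> carrier R \<Longrightarrow> \<zero>\<^bsub>R\<^esub> \<in> PIdl\<^bsub>R\<^esub> s"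
  unfolding PI_iff by (intro bexI[of _ "\<zero>\<^bsub>R\<^esub>"]) auto

lemma g_B: assumes a: "\<And>n. a n \<in> carrier R" and aB: "\<And>n. a n \<in> PIdl\<^bsub>R\<^esub> (q n)"
  shows "g j a \<in> PIdl\<^bsub>R\<^esub> (q k)"
proof -
  have ex: "\<exists>t. t \<in> carrier R \<and> a n = q k \<otimes>\<^bsub>R\<^esub> t" if kn: "k \<le> n" for n
  proof -
    obtain y where y: "y \<in> carrier R" "a n = y \<otimes>\<^bsub>R\<^esub> q n" using aB[of n] by (auto simp: PI_iff)
    obtain u where u: "u \<in> carrier R" "q n = q k \<otimes>\<^bsub>R\<^esub> u" using q_dvd[OF kn] by blast
    have "a n = q k \<otimes>\<^bsub>R\<^esub> (y \<otimes>\<^bsub>R\<^esub> u)" using y u q_R[of k] by simp algebra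
    then show ?thesis using y u by blast
  qed
  define a2 where "a2 n = (if n < k then \<zero>\<^bsub>R\<^esub> else (SOME t. t \<in> carrier R \<and> a n = q k \<otimes>\<^bsub>R\<^esub> t))" for n
  have a2: "a2 n \<in> carrier R \<and> (k \<le> n \<longrightarrow> a n = q k \<otimes>\<^bsub>R\<^esub> a2 n)" for n
  proof (cases "n < k")
    case True then show ?thesis by (simp add: a2_def)
  next
    case False
    then have "k \<le> n" by simp
    from someI_ex[OF ex[OF this]] False show ?thesis by (simp add: a2_def)
  qed
  have a2R: "\<And>n. a2 n \<in> carrier R" using a2 by blast
  have trR: "\<And>n. tr k a n \<in> carrier R" using a by (simp add: tr_def)
  have qa2R: "\<And>n. q k \<otimes>\<^bsub>R\<^esub> a2 n \<in> carrier R" using a2R q_R by simp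
  have eq: "a = (\<lambda>n. tr k a n \<oplus>\<^bsub>R\<^esub> q k \<otimes>\<^bsub>R\<^esub> a2 n)"
  proof (rule ext)
    fix n show "a n = tr k a n \<oplus>\<^bsub>R\<^esub> q k \<otimes>\<^bsub>R\<^esub> a2 n"
    proof (cases "n < k")
      case True then show ?thesis using a[of n] q_R[of k] by (simp add: tr_def a2_def)
    next
      case False then show ?thesis using a2[of n] q_R[of k] a2R[of n] by (simp add: tr_def)
    qed
  qed
  have "g j a = g j (tr k a) \<oplus>\<^bsub>R\<^esub> g j (\<lambda>n. q k \<otimes>\<^bsub>R\<^esub> a2 n)"
    by (subst eq) (rule g_add[OF trR qa2R])
  also have "\<dots> = q k \<otimes>\<^bsub>R\<^esub> g j a2"
    using g_tr[OF a] g_sm[OF a2R q_R] g_R[OF a2R] q_R[of k] by simp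
  finally have ga: "g j a = q k \<otimes>\<^bsub>R\<^esub> g j a2" .
  have gR: "g j a2 \<in> carrier R" by (rule g_R) (rule a2R)
  show ?thesis unfolding PI_iff ga using gR q_R[of k] by (intro bexI[of _ "g j a2"]) (auto simp: M.m_comm)
qed

lemma g_B0: assumes a: "\<And>n. a n \<in> carrier R" and aB: "\<And>n. a n \<in> PIdl\<^bsub>R\<^esub> (q n)"
  shows "g j a = \<zero>\<^bsub>R\<^esub>"
proof -
  have "g j a \<in> (\<Inter>s\<in>S. PIdl\<^bsub>R\<^esub> s)"
  proof
    fix s assume s: "s \<in> S"
    then obtain i where i: "q i \<in> PIdl\<^bsub>R\<^esub> s" using q_PIdl_s by blast
    have sR: "s \<in> carrier R" using s S_props by auto
    have "g j a \<in> PIdl\<^bsub>R\<^esub> (q i)" by (rule g_B[where a=a, OF a aB])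
    then show "g j a \<in> PIdl\<^bsub>R\<^esub> s" using PIdl_mono[OF sR i] by (rule subsetD[rotated])
  qed
  then show ?thesis using rS unfolding S_reduced_def by simp
qed

lemma g_mod: assumes a: "\<And>n. a n \<in> carrier R" and a': "\<And>n. a' n \<in> carrier R"
  and d: "\<And>n. a' n \<ominus>\<^bsub>R\<^esub> a n \<in> PIdl\<^bsub>R\<^esub> (q n)"
  shows "g j a' = g j a"
proof -
  have dR: "\<And>n. a' n \<ominus>\<^bsub>R\<^esub> a n \<in> carrier R" using a a' by simp
  have eq: "a' = (\<lambda>n. a n \<oplus>\<^bsub>R\<^esub> (a' n \<ominus>\<^bsub>R\<^esub> a n))"
  proof (rule ext)
    fix n show "a' n = a n \<oplus>\<^bsub>R\<^esub> (a' n \<ominus>\<^bsub>R\<^esub> a n)" using a[of n] a'[of n] by algebra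
  qed
  have "g j a' = g j a \<oplus>\<^bsub>R\<^esub> g j (\<lambda>n. a' n \<ominus>\<^bsub>R\<^esub> a n)"
    by (subst eq) (rule g_add[OF a dR])
  moreover have "g j (\<lambda>n. a' n \<ominus>\<^bsub>R\<^esub> a n) = \<zero>\<^bsub>R\<^esub>" by (rule g_B0[where a="\<lambda>n. a' n \<ominus>\<^bsub>R\<^esub> a n", OF dR d])
  moreover have "g j a \<in> carrier R" by (rule g_R[where a=a, OF a])
  ultimately show ?thesis by simp
qed

end


lemma gen_rcosets_E: "Y \<in> A_RCOSETS R I \<Longrightarrow> \<exists>u\<in>carrier R. Y = (\<lambda>h. h \<oplus>\<^bsub>R\<^esub> u) ` I"
  by (auto simp: A_RCOSETS_def RCOSETS_def a_r_coset_def r_coset_def)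

lemma gen_rcosets_I: "u \<in> carrier R \<Longrightarrow> (\<lambda>h. h \<oplus>\<^bsub>R\<^esub> u) ` I \<in> A_RCOSETS R I"
  by (auto simp: A_RCOSETS_def RCOSETS_def a_r_coset_def r_coset_def)

lemma gen_set_add_E: "r \<in> set_add R A B \<Longrightarrow> \<exists>x\<in>A. \<exists>y\<in>B. r = x \<oplus>\<^bsub>R\<^esub> y"
  by (auto simp: set_add_def set_mult_def)

lemma gen_set_add_I: "x \<in> A \<Longrightarrow> y \<in> B \<Longrightarrow> x \<oplus>\<^bsub>R\<^esub> y \<in> set_add R A B"
  by (auto simp: set_add_def set_mult_def)

context setting2 begin

definition "rho x n = (SOME r. r \<in> x (q n))"

definition "F j x = g j (rho x)"

lemma coset_props:
  assumes Y: "Y \<in> A_RCOSETS R (PIdl\<^bsub>R\<^esub> s)" and s: "s \<in> carrier R"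
  shows "Y \<noteq> {}" "Y \<subseteq> carrier R" "\<And>r r'. r \<in> Y \<Longrightarrow> r' \<in> Y \<Longrightarrow> r \<ominus>\<^bsub>R\<^esub> r' \<in> PIdl\<^bsub>R\<^esub> s"
proof -
  obtain u where u: "u \<in> carrier R" "Y = (\<lambda>h. h \<oplus>\<^bsub>R\<^esub> u) ` (PIdl\<^bsub>R\<^esub> s)" using gen_rcosets_E[OF Y] by blast
  show "Y \<noteq> {}" using u PI_zero[OF s] by auto
  show "Y \<subseteq> carrier R" using u PI_R[OF s] by auto
  fix r r' assume r: "r \<in> Y" and r': "r' \<in> Y"
  then obtain h h' where h: "h \<in> PIdl\<^bsub>R\<^esub> s" "h' \<in> PIdl\<^bsub>R\<^esub> s" "r = h \<oplus>\<^bsub>R\<^esub> u" "r' = h' \<oplus>\<^bsub>R\<^esub> u"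
    using u by auto
  have hR: "h \<in> carrier R" "h' \<in> carrier R" using h PI_R[OF s] by auto
  have "r \<ominus>\<^bsub>R\<^esub> r' = h \<ominus>\<^bsub>R\<^esub> h'" unfolding h(3,4) using hR u by algebra
  then show "r \<ominus>\<^bsub>R\<^esub> r' \<in> PIdl\<^bsub>R\<^esub> s" using PI_minus[OF s h(1,2)] by simp
qed

lemma compl_coset: "x \<in> S_completion R S \<Longrightarrow> x (q n) \<in> A_RCOSETS R (PIdl\<^bsub>R\<^esub> (q n))"
proof -
  assume x: "x \<in> S_completion R S"
  have "x \<in> (\<Pi>\<^sub>E s\<in>S. A_RCOSETS R (PIdl\<^bsub>R\<^esub> s))" using x unfolding S_completion_def mem_Collect_eq by (rule conjunct1)
  then show ?thesis by (rule PiE_mem) (rule q_in)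
qed

lemma rho_mem: "x (q n) \<noteq> {} \<Longrightarrow> rho x n \<in> x (q n)"
  unfolding rho_def by (rule someI_ex) (simp add: ex_in_conv)

lemma rho_compl: assumes x: "x \<in> S_completion R S"
  shows "rho x n \<in> x (q n)" "rho x n \<in> carrier R"
    "\<And>r. r \<in> x (q n) \<Longrightarrow> r \<ominus>\<^bsub>R\<^esub> rho x n \<in> PIdl\<^bsub>R\<^esub> (q n)"
    "\<And>r. r \<in> x (q n) \<Longrightarrow> r \<in> carrier R"
proof -
  note cp = coset_props[OF compl_coset[OF x] q_R]
  show 1: "rho x n \<in> x (q n)" by (rule rho_mem[where x=x and n=n, OF cp(1)])
  show "rho x n \<in> carrier R" by (rule subsetD[OF cp(2) 1])
  show "\<And>r. r \<in> x (q n) \<Longrightarrow> r \<ominus>\<^bsub>R\<^esub> rho x n \<in> PIdl\<^bsub>R\<^esub> (q n)" by (rule cp(3)[OF _ 1])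
  show "\<And>r. r \<in> x (q n) \<Longrightarrow> r \<in> carrier R" by (rule subsetD[OF cp(2)])
qed

lemma F_add: assumes x: "x \<in> S_completion R S" and y: "y \<in> S_completion R S"
  shows "F j (compl_add R S x y) = F j x \<oplus>\<^bsub>R\<^esub> F j y"
proof -
  let ?z = "compl_add R S x y"
  have z: "?z (q n) = set_add R (x (q n)) (y (q n))" for n using q_in by (simp add: compl_add_def)
  have xyR: "\<And>n. rho x n \<oplus>\<^bsub>R\<^esub> rho y n \<in> carrier R" using rho_compl(2)[OF x] rho_compl(2)[OF y] by simp
  have zprops: "rho ?z n \<in> carrier R \<and> rho ?z n \<ominus>\<^bsub>R\<^esub> (rho x n \<oplus>\<^bsub>R\<^esub> rho y n) \<in> PIdl\<^bsub>R\<^esub> (q n)" for n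
  proof -
    have "rho x n \<oplus>\<^bsub>R\<^esub> rho y n \<in> ?z (q n)" unfolding z by (rule gen_set_add_I[OF rho_compl(1)[OF x] rho_compl(1)[OF y]])
    then have ne: "?z (q n) \<noteq> {}" by (rule ex_in_conv[THEN iffD1, OF exI, rotated])
    have "rho ?z n \<in> ?z (q n)" by (rule rho_mem[where x="?z" and n=n, OF ne])
    then have "rho ?z n \<in> set_add R (x (q n)) (y (q n))" by (simp only: z)
    then obtain a a' where aa: "a \<in> x (q n)" "a' \<in> y (q n)" "rho ?z n = a \<oplus>\<^bsub>R\<^esub> a'"
      by (auto dest: gen_set_add_E)
    have aR: "a \<in> carrier R" "a' \<in> carrier R" using rho_compl(4)[OF x aa(1)] rho_compl(4)[OF y aa(2)] by auto
    have d1: "a \<ominus>\<^bsub>R\<^esub> rho x n \<in> PIdl\<^bsub>R\<^esub> (q n)" using rho_compl(3)[OF x aa(1)] .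
    have d2: "a' \<ominus>\<^bsub>R\<^esub> rho y n \<in> PIdl\<^bsub>R\<^esub> (q n)" using rho_compl(3)[OF y aa(2)] .
    have "rho ?z n \<ominus>\<^bsub>R\<^esub> (rho x n \<oplus>\<^bsub>R\<^esub> rho y n) = (a \<ominus>\<^bsub>R\<^esub> rho x n) \<oplus>\<^bsub>R\<^esub> (a' \<ominus>\<^bsub>R\<^esub> rho y n)"
      unfolding aa(3) using aR rho_compl(2)[OF x] rho_compl(2)[OF y] by algebra
    then have "rho ?z n \<ominus>\<^bsub>R\<^esub> (rho x n \<oplus>\<^bsub>R\<^esub> rho y n) \<in> PIdl\<^bsub>R\<^esub> (q n)"
      using PI_add[OF q_R d1 d2] by (rule ssubst)
    moreover have "rho ?z n \<in> carrier R" unfolding aa(3) using aR by simp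
    ultimately show ?thesis by (rule conjI[rotated])
  qed
  have zR: "\<And>n. rho ?z n \<in> carrier R" using zprops by simp
  have "F j ?z = g j (\<lambda>n. rho x n \<oplus>\<^bsub>R\<^esub> rho y n)"
    unfolding F_def
    by (rule g_mod[where a="\<lambda>n. rho x n \<oplus>\<^bsub>R\<^esub> rho y n" and a'="rho ?z", OF xyR zR]) (simp add: zprops)
  also have "\<dots> = F j x \<oplus>\<^bsub>R\<^esub> F j y" unfolding F_def
    by (rule g_add[where a="rho x" and a'="rho y", OF rho_compl(2)[OF x] rho_compl(2)[OF y]])
  finally show ?thesis .
qed

lemma F_sm: assumes r: "r \<in> carrier R" and x: "x \<in> S_completion R S"
  shows "F j (compl_smult R S r x) = r \<otimes>\<^bsub>R\<^esub> F j x"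
proof -
  let ?z = "compl_smult R S r x"
  have z: "?z (q n) = set_add R (PIdl\<^bsub>R\<^esub> (q n)) ((\<lambda>a. r \<otimes>\<^bsub>R\<^esub> a) ` x (q n))" for n
    using q_in by (simp add: compl_smult_def)
  have xR: "\<And>n. r \<otimes>\<^bsub>R\<^esub> rho x n \<in> carrier R" using rho_compl(2)[OF x] r by simp
  have zprops: "rho ?z n \<in> carrier R \<and> rho ?z n \<ominus>\<^bsub>R\<^esub> (r \<otimes>\<^bsub>R\<^esub> rho x n) \<in> PIdl\<^bsub>R\<^esub> (q n)" for n
  proof -
    have "\<zero>\<^bsub>R\<^esub> \<oplus>\<^bsub>R\<^esub> r \<otimes>\<^bsub>R\<^esub> rho x n \<in> ?z (q n)" unfolding z
      by (rule gen_set_add_I[OF PI_zero[OF q_R] imageI[OF rho_compl(1)[OF x]]])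
    then have ne: "?z (q n) \<noteq> {}" by (rule ex_in_conv[THEN iffD1, OF exI, rotated])
    have "rho ?z n \<in> ?z (q n)" by (rule rho_mem[where x="?z" and n=n, OF ne])
    then have "rho ?z n \<in> set_add R (PIdl\<^bsub>R\<^esub> (q n)) ((\<lambda>a. r \<otimes>\<^bsub>R\<^esub> a) ` x (q n))" by (simp only: z)
    from gen_set_add_E[OF this] obtain h a' where aa0: "h \<in> PIdl\<^bsub>R\<^esub> (q n)" "a' \<in> (\<lambda>a. r \<otimes>\<^bsub>R\<^esub> a) ` x (q n)" "rho ?z n = h \<oplus>\<^bsub>R\<^esub> a'"
      by blast
    then obtain a where aa: "h \<in> PIdl\<^bsub>R\<^esub> (q n)" "a \<in> x (q n)" "rho ?z n = h \<oplus>\<^bsub>R\<^esub> r \<otimes>\<^bsub>R\<^esub> a"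
      by blast
    have aR: "h \<in> carrier R" "a \<in> carrier R" using rho_compl(4)[OF x aa(2)] PI_R[OF q_R aa(1)] by auto
    have d1: "a \<ominus>\<^bsub>R\<^esub> rho x n \<in> PIdl\<^bsub>R\<^esub> (q n)" using rho_compl(3)[OF x aa(2)] .
    have "rho ?z n \<ominus>\<^bsub>R\<^esub> (r \<otimes>\<^bsub>R\<^esub> rho x n) = h \<oplus>\<^bsub>R\<^esub> r \<otimes>\<^bsub>R\<^esub> (a \<ominus>\<^bsub>R\<^esub> rho x n)"
      unfolding aa(3) using aR rho_compl(2)[OF x] r by algebra
    then have "rho ?z n \<ominus>\<^bsub>R\<^esub> (r \<otimes>\<^bsub>R\<^esub> rho x n) \<in> PIdl\<^bsub>R\<^esub> (q n)"
      using PI_add[OF q_R aa(1) PI_mult[OF q_R r d1]] by (rule ssubst)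
    moreover have "rho ?z n \<in> carrier R" unfolding aa(3) using aR r by simp
    ultimately show ?thesis by (rule conjI[rotated])
  qed
  have zR: "\<And>n. rho ?z n \<in> carrier R" using zprops by simp
  have "F j ?z = g j (\<lambda>n. r \<otimes>\<^bsub>R\<^esub> rho x n)"
    unfolding F_def
    by (rule g_mod[where a="\<lambda>n. r \<otimes>\<^bsub>R\<^esub> rho x n" and a'="rho ?z", OF xR zR]) (simp add: zprops)
  also have "\<dots> = r \<otimes>\<^bsub>R\<^esub> F j x" unfolding F_def
    by (rule g_sm[where a="rho x", OF rho_compl(2)[OF x] r])
  finally show ?thesis .
qed

definition "one_hat = (\<lambda>s\<in>S. (\<lambda>h. h \<oplus>\<^bsub>R\<^esub> \<one>\<^bsub>R\<^esub>) ` (PIdl\<^bsub>R\<^esub> s))"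

lemma one_hat_compl: "one_hat \<in> S_completion R S"
  unfolding S_completion_def mem_Collect_eq
proof (intro conjI ballI impI)
  show "one_hat \<in> (\<Pi>\<^sub>E s\<in>S. A_RCOSETS R (PIdl\<^bsub>R\<^esub> s))"
    unfolding one_hat_def restrict_PiE_iff
  proof
    fix s assume "s \<in> S"
    show "(\<lambda>h. h \<oplus>\<^bsub>R\<^esub> \<one>\<^bsub>R\<^esub>) ` (PIdl\<^bsub>R\<^esub> s) \<in> A_RCOSETS R (PIdl\<^bsub>R\<^esub> s)"
      by (rule gen_rcosets_I) simp
  qed
  fix s t assume s: "s \<in> S" and t: "t \<in> S" and "\<exists>u\<in>carrier R. t = s \<otimes>\<^bsub>R\<^esub> u"
  then obtain u where u: "u \<in> carrier R" "t = s \<otimes>\<^bsub>R\<^esub> u" by blast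
  have sR: "s \<in> carrier R" using s S_props by auto
  have "t \<in> PIdl\<^bsub>R\<^esub> s" unfolding PI_iff u(2) using u sR by (intro bexI[of _ u]) (auto simp: M.m_comm)
  then have "PIdl\<^bsub>R\<^esub> t \<subseteq> PIdl\<^bsub>R\<^esub> s" by (rule PIdl_mono[OF sR])
  then show "one_hat t \<subseteq> one_hat s" unfolding one_hat_def using s t by (simp add: image_mono)
qed

lemma F_zero: "x \<in> S_completion R S \<Longrightarrow> F j x = \<zero>\<^bsub>R\<^esub>"
proof -
  assume x: "x \<in> S_completion R S"
  have fs: "F j \<in> S_completion R S \<rightarrow> carrier R"
  proof (rule funcsetI)
    fix z assume z: "z \<in> S_completion R S"
    show "F j z \<in> carrier R" unfolding F_def by (rule g_R[where a="rho z"]) (rule rho_compl(2)[OF z])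
  qed
  have ad: "\<forall>a\<in>S_completion R S. \<forall>b\<in>S_completion R S. F j (compl_add R S a b) = F j a \<oplus>\<^bsub>R\<^esub> F j b"
    using F_add by blast
  have sm: "\<forall>r\<in>carrier R. \<forall>a\<in>S_completion R S. F j (compl_smult R S r a) = r \<otimes>\<^bsub>R\<^esub> F j a"
    using F_sm by blast
  have hom: "(F j \<in> S_completion R S \<rightarrow> carrier R \<and>
          (\<forall>a\<in>S_completion R S. \<forall>b\<in>S_completion R S. F j (compl_add R S a b) = F j a \<oplus>\<^bsub>R\<^esub> F j b) \<and>
          (\<forall>r\<in>carrier R. \<forall>a\<in>S_completion R S. F j (compl_smult R S r a) = r \<otimes>\<^bsub>R\<^esub> F j a))
       \<longrightarrow> (\<forall>a\<in>S_completion R S. F j a = \<zero>\<^bsub>R\<^esub>)"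
    using hS unfolding hom_completion_zero_def by (rule spec)
  have "\<forall>a\<in>S_completion R S. F j a = \<zero>\<^bsub>R\<^esub>" by (rule mp[OF hom]) (intro conjI fs ad sm)
  then show ?thesis using x by (rule bspec)
qed

lemma g_ones: "g j (\<lambda>n. \<one>\<^bsub>R\<^esub>) = \<zero>\<^bsub>R\<^esub>"
proof -
  have oR: "\<And>n. rho one_hat n \<in> carrier R" by (rule rho_compl[OF one_hat_compl])
  have "g j (\<lambda>n. \<one>\<^bsub>R\<^esub>) = g j (rho one_hat)"
  proof (rule g_mod[where a="rho one_hat" and a'="\<lambda>n. \<one>\<^bsub>R\<^esub>", OF oR])
    fix n
    have "\<one>\<^bsub>R\<^esub> \<in> (\<lambda>h. h \<oplus>\<^bsub>R\<^esub> \<one>\<^bsub>R\<^esub>) ` (PIdl\<^bsub>R\<^esub> (q n))"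
      by (rule image_eqI[where x="\<zero>\<^bsub>R\<^esub>"]) (simp_all add: PI_zero q_R)
    then have "\<one>\<^bsub>R\<^esub> \<in> one_hat (q n)" unfolding one_hat_def using q_in by simp
    then show "\<one>\<^bsub>R\<^esub> \<ominus>\<^bsub>R\<^esub> rho one_hat n \<in> PIdl\<^bsub>R\<^esub> (q n)"
      by (rule rho_compl(3)[OF one_hat_compl])
  qed simp
  also have "\<dots> = \<zero>\<^bsub>R\<^esub>" using F_zero[OF one_hat_compl] unfolding F_def .
  finally show ?thesis .
qed

theorem contradiction: False
proof -
  have oR: "\<And>n. \<one>\<^bsub>R\<^esub> \<in> carrier R" by simp
  have cf: "c (\<lambda>n. \<one>\<^bsub>R\<^esub>) \<in> free_mod R H" using c_props[where a="\<lambda>n. \<one>\<^bsub>R\<^esub>", OF oR] by (rule conjunct1)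
  have one_ne: "\<one>\<^bsub>R\<^esub> \<noteq> \<zero>\<^bsub>R\<^esub>" using S_props(2,3) by auto
  have "c (\<lambda>n. \<one>\<^bsub>R\<^esub>) (b j) = \<one>\<^bsub>R\<^esub>" for j
  proof -
    have cR1: "c (\<lambda>n. \<one>\<^bsub>R\<^esub>) (b j) \<in> carrier R" by (rule cb_R[where a="\<lambda>n. \<one>\<^bsub>R\<^esub>"]) simp
    have "c (\<lambda>n. \<one>\<^bsub>R\<^esub>) (b j) \<ominus>\<^bsub>R\<^esub> \<one>\<^bsub>R\<^esub> = \<zero>\<^bsub>R\<^esub>" using g_ones[of j] unfolding g_def .
    moreover have "cring R" using M.module_axioms unfolding module_def by blast
    ultimately show ?thesis using cR1 by (simp add: ring.r_right_minus_eq[OF cring.axioms(1)])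
  qed
  then have "range b \<subseteq> supp (c (\<lambda>n. \<one>\<^bsub>R\<^esub>))" using b_H one_ne by (auto simp: supp_def)
  moreover have "finite (supp (c (\<lambda>n. \<one>\<^bsub>R\<^esub>)))" using free_modD(2)[OF cf] .
  ultimately have "finite (range b)" by (rule finite_subset)
  then show False using b_inj by (simp add: finite_image_iff)
qed

end

theorem corollary3p19:
  fixes R :: "'r ring" and C :: "'v graph set"
    and GO :: "'v graph \<Rightarrow> ('r, 'm) module"
    and GM :: "'v graph \<Rightarrow> 'v graph \<Rightarrow> ('v \<Rightarrow> 'v) \<Rightarrow> 'm \<Rightarrow> 'm"
  assumes "cring R" and "countable (carrier R)" and "cotorsion_free R"
    and "almost_full_embedding R C GO GM"
    and "gX \<in> C" and "gY \<in> C"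
    and "\<not> countable (graph_hom gX gY)"
  shows "\<not> countable (carrier (GO gX)) \<or> \<not> countable (carrier (GO gY))"
proof (rule ccontr)
  assume "\<not> (\<not> countable (carrier (GO gX)) \<or> \<not> countable (carrier (GO gY)))"
  then have cX: "countable (carrier (GO gX))" and cY: "countable (carrier (GO gY))" by auto
  obtain S where S: "countable S" "mult_subset R S" "S_reduced R S" "hom_completion_zero R S"
    using assms(3) unfolding cotorsion_free_def by blast
  have F: "graph_module_functor R C GO GM" and B: "bij_betw (gamma_map R GO GM gX gY)
        (free_mod R (graph_hom gX gY)) (lin_hom R (GO gX) (GO gY))"
    using assms(4,5,6) unfolding almost_full_embedding_def by auto
  have mX: "module R (GO gX)" using F assms(5) unfolding graph_module_functor_def torsion_free_module_def by blast
  have mY: "module R (GO gY)" using F assms(6) unfolding graph_module_functor_def torsion_free_module_def by blast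
  have G: "GM gX gY \<phi> m \<in> carrier (GO gY)" if "\<phi> \<in> graph_hom gX gY" "m \<in> carrier (GO gX)" for \<phi> m
  proof -
    have "restrict (GM gX gY \<phi>) (carrier (GO gX)) \<in> lin_hom R (GO gX) (GO gY)"
      using F assms(5,6) that(1) unfolding graph_module_functor_def by blast
    then have "restrict (GM gX gY \<phi>) (carrier (GO gX)) m \<in> carrier (GO gY)"
      using that(2) unfolding lin_hom_def by auto
    then show ?thesis using that(2) by simp
  qed
  interpret setting2 R "GO gX" "GO gY" "graph_hom gX gY" "GM gX gY" "gamma_map R GO GM gX gY" S
  proof (intro setting2.intro setting.intro setting_axioms.intro setting2_axioms.intro mX mY)
    show "\<And>\<phi> m. \<phi> \<in> graph_hom gX gY \<Longrightarrow> m \<in> carrier (GO gX) \<Longrightarrow> GM gX gY \<phi> m \<in> carrier (GO gY)"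
      by (rule G)
    show "gamma_map R GO GM gX gY = (\<lambda>c. \<lambda>m\<in>carrier (GO gX). finsum (GO gY) (\<lambda>\<phi>. c \<phi> \<odot>\<^bsub>GO gY\<^esub> GM gX gY \<phi> m) {\<phi>\<in>graph_hom gX gY. c \<phi> \<noteq> \<zero>\<^bsub>R\<^esub>})"
      by (rule ext) (simp add: gamma_map_def)
  qed (use B cX cY assms(7) S in auto)
  show False by (rule contradiction)
qed

end
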